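(* The closure of the set of periodic points of $\Phi_{\mathrm{Id}}\colon\mathrm{M}\mapsto\mathrm{M}^2$ on $\mathcal{M}(2;\mathbb{C})$ is $\{\mathbf{0}\}\cup\Lambda^0\cup\Lambda^1\cup\Lambda^2$, where $\Lambda^0=\{\mathrm{M}:\det\mathrm{M}=0,\ |\mathrm{tr}\,\mathrm{M}|=1\}$, $\Lambda^1=\{\mathrm{M}:(\mathrm{tr}\,\mathrm{M})^2-4\det\mathrm{M}=0,\ |\det\mathrm{M}|=1\}$, $\Lambda^2=\{\mathrm{M}:\frac{(\mathrm{tr}\,\mathrm{M})^2}{\det\mathrm{M}}\in[0,4[,\ |\det\mathrm{M}|=1\}$.
   Context: $\mathbf{0}$ is the zero matrix. A point is periodic if $\Phi_{\mathrm{Id}}^k(\mathrm{M})=\mathrm{M}$ for some $k\geq1$. ($\Lambda^0$: one eigenvalue of modulus $1$ and the other zero; $\Lambda^1$: a double eigenvalue of modulus $1$; $\Lambda^2$: two distinct eigenvalues of modulus $1$.) *)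

theory Defs
  imports "HOL-Analysis.Analysis"
begin

type_synonym cmat2 = "complex^2^2"

definition Phi_Id :: "cmat2 \<Rightarrow> cmat2" where
  "Phi_Id M = M ** M"

definition periodic_pt :: "cmat2 \<Rightarrow> bool" where
  "periodic_pt M \<longleftrightarrow> (\<exists>k::nat. k \<ge> 1 \<and> (Phi_Id ^^ k) M = M)"

definition Lambda0 :: "cmat2 set" where
  "Lambda0 = {M. det M = 0 \<and> cmod (trace M) = 1}"

definition Lambda1 :: "cmat2 set" where
  "Lambda1 = {M. (trace M)^2 - 4 * det M = 0 \<and> cmod (det M) = 1}"

definition Lambda2 :: "cmat2 set" where
  "Lambda2 = {M. (\<exists>r::real. 0 \<le> r \<and> r < 4 \<and> (trace M)^2 / det M = complex_of_real r)
                 \<and> cmod (det M) = 1}"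

end

theory Submission
  imports Defs
begin

definition mk2 :: "complex \<Rightarrow> complex \<Rightarrow> complex \<Rightarrow> complex \<Rightarrow> cmat2" where
  "mk2 a b c d = (\<chi> i j. if i = 1 then (if j = 1 then a else b) else (if j = 1 then c else d))"

lemma two_ne_one [simp]: "(2::2) \<noteq> 1" by simp

lemma mk2_nth [simp]:
  "mk2 a b c d $ 1 $ 1 = a" "mk2 a b c d $ 1 $ 2 = b"
  "mk2 a b c d $ 2 $ 1 = c" "mk2 a b c d $ 2 $ 2 = d"
  by (simp_all add: mk2_def)

lemma cmat_eq: "(A::cmat2) = B \<longleftrightarrow> A$1$1 = B$1$1 \<and> A$1$2 = B$1$2 \<and> A$2$1 = B$2$1 \<and> A$2$2 = B$2$2"
  by (auto simp: vec_eq_iff forall_2)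

lemma mul_nth [simp]: "((A::cmat2) ** B) $ i $ j = A$i$1 * B$1$j + A$i$2 * B$2$j"
  by (simp add: matrix_matrix_mult_def sum_2)

lemma mat_nth [simp]: "(mat x :: cmat2) $1$1 = x" "(mat x :: cmat2) $1$2 = 0" "(mat x :: cmat2) $2$1 = 0" "(mat x :: cmat2) $2$2 = x"
  by (simp_all add: mat_def)

lemma trace2: "trace (A::cmat2) = A$1$1 + A$2$2"
  by (simp add: trace_def sum_2)

lemma quad_root: "\<exists>l::complex. l^2 - t*l + d = 0"
proof -
  let ?l = "(t + csqrt (t^2 - 4*d))/2"
  have "csqrt (t^2 - 4*d) ^2 = t^2 - 4*d" by simp
  then have "?l^2 - t*?l + d = 0" by (simp add: field_simps power2_eq_square) algebra
  then show ?thesis by blast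
qed

lemma triang: "\<exists>P Q T. P ** Q = mat 1 \<and> Q ** P = mat 1 \<and> T$2$1 = 0 \<and> M = P ** T ** (Q::cmat2)"
proof (cases "M$2$1 = 0")
  case True
  then show ?thesis by (intro exI[of _ "mat 1"] exI[of _ M]) simp
next
  case False
  define a where "a = M$1$1" define b where "b = M$1$2"
  define c where "c = M$2$1" define d where "d = M$2$2"
  obtain l where l: "l^2 - (a+d)*l + (a*d - b*c) = 0" using quad_root by blast
  define P where "P = mk2 (l-d) 1 c 0"
  define Q where "Q = mk2 0 (1/c) 1 ((d-l)/c)"
  have c: "c \<noteq> 0" using False c_def by simp
  have PQ: "P ** Q = mat 1" using c by (simp add: cmat_eq P_def Q_def field_simps)
  have QP: "Q ** P = mat 1" using c by (simp add: cmat_eq P_def Q_def field_simps)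
  have "(Q ** M ** P) $ 2 $ 1 = 0"
    using c l unfolding P_def Q_def a_def b_def c_def d_def
    by (simp add: field_simps power2_eq_square) algebra
  moreover have "M = P ** (Q ** M ** P) ** Q"
    by (simp add: matrix_mul_assoc PQ) (simp add: matrix_mul_assoc[symmetric] PQ)
  ultimately show ?thesis using PQ QP by blast
qed

lemma pow2suc: "(x::complex) ^ (2 ^ Suc k) = x^(2^k) * x^(2^k)"
  by (simp add: power_add[symmetric] mult_2)

lemma phi_conj: assumes "Q ** P = (mat 1::cmat2)"
  shows "(Phi_Id^^k) (P ** A ** Q) = P ** (Phi_Id^^k) A ** Q"
proof (induction k)
  case 0 then show ?case by simp
next
  case (Suc k)
  let ?X = "(Phi_Id^^k) A"
  have e: "(P ** ?X ** Q) ** (P ** ?X ** Q) = P ** (?X ** ?X) ** Q"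
    by (simp add: matrix_mul_assoc) (simp add: matrix_mul_assoc[symmetric] assms)
  have "(Phi_Id^^Suc k) (P ** A ** Q) = Phi_Id (P ** ?X ** Q)" using Suc by simp
  also have "\<dots> = P ** (Phi_Id ?X) ** Q" using e by (simp only: Phi_Id_def[of ?X] Phi_Id_def[of "P ** ?X ** Q"])
  finally show ?case by simp
qed

lemma phi_tri_gen: assumes "(A::cmat2)$2$1 = 0"
  shows "(Phi_Id^^k) A $2$1 = 0 \<and> (Phi_Id^^k) A $1$1 = A$1$1^(2^k) \<and> (Phi_Id^^k) A $2$2 = A$2$2^(2^k)"
proof (induction k)
  case 0 then show ?case using assms by simp
next
  case (Suc k) then show ?case by (simp add: Phi_Id_def pow2suc del: power_Suc)
qed

lemma aux_tri: "(w::complex) \<noteq> 0 \<Longrightarrow> u * (c * (u - v)) / w + c * (u - v) * v / w = c * (u * u - v * v) / w"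
  by (simp add: field_simps)

lemma phi_tri: assumes "(A::cmat2)$2$1 = 0" "A$1$1 \<noteq> A$2$2"
  shows "(Phi_Id^^k) A = mk2 (A$1$1^(2^k)) (A$1$2 * (A$1$1^(2^k) - A$2$2^(2^k))/(A$1$1 - A$2$2)) 0 (A$2$2^(2^k))"
proof (induction k)
  case 0 then show ?case using assms by (simp add: cmat_eq)
next
  case (Suc k)
  have d: "A$1$1 - A$2$2 \<noteq> 0" using assms by simp
  let ?X = "(Phi_Id^^k) A"
  have x: "?X$1$1 = A$1$1^(2^k)" "?X$1$2 = A$1$2 * (A$1$1^(2^k) - A$2$2^(2^k))/(A$1$1 - A$2$2)"
     "?X$2$1 = 0" "?X$2$2 = A$2$2^(2^k)" using Suc by (simp_all add: cmat_eq)
  have "(Phi_Id^^Suc k) A = ?X ** ?X" by (simp add: Phi_Id_def)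
  then show ?case using d by (simp add: cmat_eq x pow2suc aux_tri[OF d] del: power_Suc)
qed

lemma phi_zero: assumes "(A::cmat2)$2$1 = 0" "A$1$1 = 0" "A$2$2 = 0" "k \<ge> 1"
  shows "(Phi_Id^^k) A = mat 0"
proof -
  have z: "Phi_Id A = mat 0" using assms by (simp add: Phi_Id_def cmat_eq)
  have z0: "Phi_Id (mat 0) = mat 0" by (simp add: Phi_Id_def cmat_eq)
  have "(Phi_Id^^(Suc j)) A = mat 0" for j
  proof (induction j)
    case 0 then show ?case using z by simp
  next
    case (Suc j) then show ?case using z0 by simp
  qed
  moreover obtain j where "k = Suc j" using assms(4) by (cases k) auto
  ultimately show ?thesis by simp
qed

lemma tr_det_conj: fixes P Q T :: cmat2 assumes "P ** Q = (mat 1::cmat2)" "Q ** P = mat 1"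
  shows "trace (P ** T ** Q) = trace T" "det (P ** T ** Q) = det T"
proof -
  show "trace (P ** T ** Q) = trace T"
    by (metis assms(2) matrix_mul_assoc matrix_mul_rid trace_mul_sym)
  have "det P * det Q = 1" using assms(1) by (metis det_I det_mul)
  then show "det (P ** T ** Q) = det T" by (simp add: det_mul)
qed

definition S3 :: "complex \<Rightarrow> complex \<Rightarrow> bool" where
  "S3 t d \<longleftrightarrow> cmod d = 1 \<and> t = d * cnj t \<and> cmod t \<le> 2"

lemma tcnj: "t * cnj t = complex_of_real ((cmod t)^2)"
  by (metis complex_norm_square of_real_power)

lemma L12: "((t^2 - 4*d = 0 \<and> cmod d = 1) \<or> ((\<exists>r::real. 0 \<le> r \<and> r < 4 \<and> t^2/d = complex_of_real r) \<and> cmod d = 1))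
   \<longleftrightarrow> S3 t d"
proof
  assume h: "(t^2 - 4*d = 0 \<and> cmod d = 1) \<or> ((\<exists>r::real. 0 \<le> r \<and> r < 4 \<and> t^2/d = complex_of_real r) \<and> cmod d = 1)"
  then have d1: "cmod d = 1" by blast
  then have dnz: "d \<noteq> 0" by auto
  from h show "S3 t d"
  proof
    assume a: "t^2 - 4*d = 0 \<and> cmod d = 1"
    then have t2: "t^2 = 4*d" by simp
    then have "cmod (t^2) = 4" using d1 by (simp add: norm_mult)
    then have "(cmod t)^2 = 4" by (simp add: norm_power)
    then have nt: "cmod t = 2" by (metis norm_ge_zero power2_eq_square real_sqrt_abs real_sqrt_mult_self abs_of_nonneg real_sqrt_four)
    have "4 * (d * cnj t) = t * (t * cnj t)" using t2 by (simp add: power2_eq_square)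
    also have "\<dots> = 4 * t" using nt by (simp add: tcnj)
    finally have "t = d * cnj t" by simp
    moreover have "cmod t \<le> 2" using nt by simp
    ultimately show "S3 t d" using d1 unfolding S3_def by blast
  next
    assume "(\<exists>r::real. 0 \<le> r \<and> r < 4 \<and> t^2/d = complex_of_real r) \<and> cmod d = 1"
    then obtain r where r: "0 \<le> r" "r < 4" "t^2/d = complex_of_real r" by blast
    then have t2: "t^2 = r * d" using dnz by (simp add: field_simps)
    then have "cmod (t^2) = r" using d1 r(1) by (simp add: norm_mult)
    then have nt2: "(cmod t)^2 = r" by (simp add: norm_power)
    then have "(cmod t)^2 \<le> 2^2" using r(2) by simp
    then have nt: "cmod t \<le> 2" by (rule power2_le_imp_le) simp
    have "t * (d * cnj t) = t * t"
    proof -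
      have "t * (d * cnj t) = d * (t * cnj t)" by simp
      also have "\<dots> = d * r" by (simp add: tcnj nt2)
      finally show ?thesis using t2 by (simp add: power2_eq_square mult.commute)
    qed
    then have "t = d * cnj t" by (cases "t = 0") auto
    then show "S3 t d" using d1 nt unfolding S3_def by blast
  qed
next
  assume s: "S3 t d"
  then have d1: "cmod d = 1" and e: "t = d * cnj t" and nt: "cmod t \<le> 2" unfolding S3_def by blast+
  have dnz: "d \<noteq> 0" using d1 by auto
  have t2: "t^2 = d * (cmod t)^2"
  proof -
    have "t^2 = t * (d * cnj t)" using e by (simp add: power2_eq_square)
    also have "\<dots> = d * (t * cnj t)" by simp
    finally show ?thesis by (simp add: tcnj)
  qed
  show "(t^2 - 4*d = 0 \<and> cmod d = 1) \<or> ((\<exists>r::real. 0 \<le> r \<and> r < 4 \<and> t^2/d = complex_of_real r) \<and> cmod d = 1)"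
  proof (cases "cmod t = 2")
    case True
    then show ?thesis using t2 d1 by simp
  next
    case False
    then have "cmod t < 2" using nt by simp
    then have "(cmod t)^2 < 2^2" by (intro power_strict_mono) auto
    then have h1: "(cmod t)^2 < 4" by simp
    have h2: "t^2/d = complex_of_real ((cmod t)^2)" using t2 dnz by simp
    have "\<exists>r::real. 0 \<le> r \<and> r < 4 \<and> t^2/d = complex_of_real r"
      by (intro exI[of _ "(cmod t)^2"] conjI zero_le_power2 h1 h2)
    then show ?thesis using d1 by blast
  qed
qed

lemma C_S3: assumes "cmod l = 1" "cmod m = 1" shows "S3 (l+m) (l*m)"
proof -
  have a: "l * cnj l = 1" "m * cnj m = 1" using assms by (simp_all add: tcnj)
  have "l*m * cnj (l+m) = (l * cnj l) * m + (m * cnj m) * l" by (simp add: algebra_simps)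
  also have "\<dots> = l + m" using a by simp
  finally have "l + m = l * m * cnj (l+m)" by simp
  moreover have "cmod (l+m) \<le> 2" using norm_triangle_ineq[of l m] assms by simp
  moreover have "cmod (l*m) = 1" using assms by (simp add: norm_mult)
  ultimately show ?thesis unfolding S3_def by blast
qed

lemma S3_C: assumes "S3 (l+m) (l*m)" shows "cmod l = 1 \<and> cmod m = 1"
proof -
  from assms have d0: "cmod (l*m) = 1" and e: "l + m = l*m*cnj (l+m)" and nt: "cmod (l+m) \<le> 2"
    unfolding S3_def by blast+
  have d1: "cmod l * cmod m = 1" using d0 by (simp add: norm_mult)
  define s where "s = cmod l"
  have sp: "s > 0" using d1 s_def by (metis norm_ge_zero order_le_less mult_zero_left zero_neq_one)
  have s': "cmod m = 1/s" using d1 sp s_def by (simp add: field_simps)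
  have "l*m*cnj (l+m) = (l * cnj l) * m + (m * cnj m) * l" by (simp add: algebra_simps)
  also have "\<dots> = of_real (s^2) * m + of_real (1/s^2) * l" using s' s_def by (simp add: tcnj power_divide)
  finally have eq: "l + m = of_real (s^2) * m + of_real (1/s^2) * l" using e by simp
  have "s = 1"
  proof (rule ccontr)
    assume ne: "s \<noteq> 1"
    define a where "a = complex_of_real s"
    have anz: "a \<noteq> 0" using sp a_def by simp
    have a21: "a^2 - 1 \<noteq> 0"
    proof
      assume "a^2 - 1 = 0"
      then have "s^2 = 1" unfolding a_def by (metis of_real_1 of_real_eq_iff of_real_power right_minus_eq)
      then show False using ne sp by (simp add: power2_eq_1_iff)
    qed
    have eq2: "l + m = a^2 * m + l / a^2" using eq unfolding a_def by (simp add: of_real_power divide_inverse)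
    have "(a^2 - 1) * m = (a^2 - 1) * (l / a^2)" using eq2 anz by (simp add: field_simps)
    then have mm: "m = l / a^2" using a21 by (metis mult_left_cancel)
    have lm: "l + m = l * of_real (1 + 1/s^2)" using mm unfolding a_def by (simp add: field_simps)
    have n1: "cmod (complex_of_real (1 + 1/s^2)) = 1 + 1/s^2" unfolding norm_of_real
      by (rule abs_of_nonneg) simp
    have "cmod (l+m) = s * (1 + 1/s^2)" unfolding lm norm_mult n1 by (simp add: s_def)
    then have "s * (1 + 1/s^2) \<le> 2" using nt by simp
    then have "s * (s^2 + 1) \<le> s * (2 * s)" using sp by (simp add: field_simps power2_eq_square)
    then have "s^2 + 1 \<le> 2 * s" using sp by (simp add: mult_le_cancel_left_pos)
    then have "(s - 1)^2 \<le> 0" by (simp add: power2_eq_square algebra_simps)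
    then show False using ne by simp
  qed
  then show ?thesis using s' s_def by simp
qed

definition NN :: "nat \<Rightarrow> nat" where "NN n = 2^(n+2) - 1"

definition ap :: "real \<Rightarrow> int \<Rightarrow> nat \<Rightarrow> complex" where
  "ap th e n = cis (2*pi*(of_int (\<lfloor>th * NN n / (2*pi)\<rfloor> + e)) / NN n)"

lemma NN_ge: "NN n \<ge> n + 2" "real (NN n) + 1 = 2^(n+2)"
proof -
  have "n + 2 < 2^(n+2)" by (rule less_exp)
  then show "NN n \<ge> n + 2" unfolding NN_def by linarith
  have "(1::nat) \<le> 2^(n+2)" by simp
  then show "real (NN n) + 1 = 2^(n+2)" unfolding NN_def by (simp add: of_nat_diff)
qed

lemma NN_pos: "real (NN n) > 0" using NN_ge(1)[of n] by simp

lemma ap_per: "ap th e n ^ (2^(n+2)) = ap th e n"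
proof -
  define j where "j = real_of_int (\<lfloor>th * NN n / (2*pi)\<rfloor> + e)"
  define x where "x = 2*pi*j / NN n"
  have ap: "ap th e n = cis x" unfolding ap_def x_def j_def by simp
  have h: "real (2^(n+2)::nat) = real (NN n) + 1" using NN_ge(2)[of n] by simp
  have "real (2^(n+2)::nat) * x = x + 2*pi*j"
    unfolding h x_def using NN_pos[of n] by (simp add: field_simps)
  moreover have "cis x ^ (2^(n+2)) = cis (real (2^(n+2)::nat) * x)" by (rule Complex.DeMoivre)
  ultimately have "cis x ^ (2^(n+2)) = cis x * cis (2*pi*j)" by (simp only: cis_mult)
  also have "cis (2*pi*j) = 1" unfolding j_def by (rule cis_multiple_2pi) simp
  finally show ?thesis using ap by simp
qed

lemma ap_shift: "ap th (e+1) n = ap th e n * cis (2*pi / NN n)"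
  unfolding ap_def cis_mult using NN_pos[of n] by (simp add: field_simps)

lemma cis_ne1: "cis (2*pi / NN n) \<noteq> 1"
proof
  assume "cis (2*pi / NN n) = 1"
  then have "cos (2*pi / NN n) = 1" by (metis cis.simps(1) one_complex.simps(1))
  from cos_one_2pi_int[THEN iffD1, OF this] obtain k::int where k: "2*pi / NN n = real_of_int k * 2 * pi" by blast
  have N3: "real (NN n) \<ge> 2" using NN_ge(1)[of n] by simp
  have "k * real (NN n) = 1" using k N3 by (simp add: field_simps)
  then have "k * int (NN n) = 1" by (metis of_int_1 of_int_eq_iff of_int_mult of_int_of_nat_eq)
  then have "int (NN n) = 1 \<or> int (NN n) = -1" using zmult_eq_1_iff by blast
  moreover have "NN n \<ge> 2" using NN_ge(1)[of n] by simp
  ultimately show False by simp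
qed

lemma ap_ne: "ap th (e+1) n \<noteq> ap th e n"
  using cis_ne1[of n] unfolding ap_shift by (simp add: ap_def)

lemma ap_lim: assumes "\<And>n. 0 \<le> e n \<and> e n \<le> 1"
  shows "(\<lambda>n. ap th (e n) n) \<longlonglongrightarrow> cis th"
proof -
  define x where "x n = 2*pi*(of_int (\<lfloor>th * NN n / (2*pi)\<rfloor> + e n)) / NN n" for n
  have b: "norm (x n - th) \<le> 2*pi / real (Suc n)" for n
  proof -
    define y where "y = th * NN n / (2*pi)"
    have fl: "of_int \<lfloor>y\<rfloor> \<le> y" "y < of_int \<lfloor>y\<rfloor> + 1" by linarith+
    have "\<bar>of_int (\<lfloor>y\<rfloor> + e n) - y\<bar> \<le> 1" using fl assms[of n] by linarith
    have N: "real (NN n) > 0" by (rule NN_pos)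
    have "x n - th = 2*pi*(of_int (\<lfloor>y\<rfloor> + e n) - y) / NN n"
      unfolding x_def y_def using N by (simp add: field_simps)
    then have "norm (x n - th) = 2*pi*\<bar>of_int (\<lfloor>y\<rfloor> + e n) - y\<bar> / NN n"
      using N by (simp add: abs_mult)
    also have "\<dots> \<le> 2*pi*1 / NN n"
      using \<open>\<bar>_ - y\<bar> \<le> 1\<close> N by (intro divide_right_mono mult_left_mono) auto
    also have "\<dots> \<le> 2*pi / real (Suc n)"
      using NN_ge(1)[of n] by (simp, intro divide_left_mono) auto
    finally show ?thesis .
  qed
  have "(\<lambda>n. 2*pi / real (Suc n)) \<longlonglongrightarrow> 0"
    using LIMSEQ_Suc[OF lim_const_over_n[of "2*pi"]] by simp
  then have "(\<lambda>n. x n - th) \<longlonglongrightarrow> 0"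
    by (rule Lim_null_comparison[rotated]) (intro always_eventually allI b)
  then have "x \<longlonglongrightarrow> th" by (simp add: LIM_zero_iff)
  then have "(\<lambda>n. cis (x n)) \<longlonglongrightarrow> cis th" by (rule tendsto_cis)
  then show ?thesis unfolding ap_def x_def by simp
qed

definition CC :: "complex \<Rightarrow> complex \<Rightarrow> bool" where
  "CC l m \<longleftrightarrow> (l = 0 \<and> cmod m = 1) \<or> (cmod l = 1 \<and> m = 0) \<or> (cmod l = 1 \<and> cmod m = 1)"

definition SA :: "cmat2 set" where
  "SA = {mat 0} \<union> {M. det M = 0 \<and> cmod (trace M) = 1} \<union> {M. S3 (trace M) (det M)}"

lemma S_eq: "{mat 0} \<union> Lambda0 \<union> Lambda1 \<union> Lambda2 = SA"
  unfolding SA_def Lambda0_def Lambda1_def Lambda2_def using L12 by blast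

lemma cont_det: "continuous_on UNIV (\<lambda>M::cmat2. det M)"
  unfolding det_2 by (intro continuous_intros)

lemma cont_tr: "continuous_on UNIV (\<lambda>M::cmat2. trace M)"
  unfolding trace2 by (intro continuous_intros)

lemma closed_SA: "closed SA"
proof -
  have c1: "closed {M::cmat2. det M = 0 \<and> cmod (trace M) = 1}"
    by (intro closed_Collect_conj closed_Collect_eq continuous_intros cont_det cont_tr)
  have c2: "closed {M::cmat2. S3 (trace M) (det M)}"
    unfolding S3_def
    by (intro closed_Collect_conj closed_Collect_eq closed_Collect_le continuous_intros cont_det cont_tr)
  show ?thesis unfolding SA_def by (intro closed_Un closed_singleton c1 c2)
qed

lemma CC_SA: assumes "CC (T$1$1) (T$2$2)" "trace M = T$1$1 + T$2$2" "det M = T$1$1 * T$2$2"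
  shows "M \<in> SA"
proof -
  consider "T$1$1 = 0 \<and> cmod (T$2$2) = 1" | "cmod (T$1$1) = 1 \<and> T$2$2 = 0" | "cmod (T$1$1) = 1 \<and> cmod (T$2$2) = 1"
    using assms(1) unfolding CC_def by blast
  then show ?thesis
  proof cases
    case 3 then show ?thesis using C_S3[of "T$1$1" "T$2$2"] assms unfolding SA_def by simp
  qed (use assms in \<open>auto simp: SA_def\<close>)
qed

lemma SA_CC: assumes "M \<in> SA" "M \<noteq> mat 0" "trace M = l + m" "det M = l * m"
  shows "CC l m"
proof -
  have "(det M = 0 \<and> cmod (trace M) = 1) \<or> S3 (trace M) (det M)" using assms(1,2) unfolding SA_def by blast
  then show ?thesis
  proof
    assume "det M = 0 \<and> cmod (trace M) = 1"
    then show ?thesis using assms(3,4) unfolding CC_def by auto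
  next
    assume "S3 (trace M) (det M)"
    then show ?thesis using S3_C[of l m] assms(3,4) unfolding CC_def by simp
  qed
qed

lemma root_unit: assumes "(z::complex)^(2^k) = z" "k \<ge> 1" shows "z = 0 \<or> cmod z = 1"
proof (cases "z = 0")
  case False
  have k: "2^k = Suc (2^k - 1)" by simp
  have "z * z^(2^k - 1) = z * 1" using assms(1) by (metis k power_Suc mult_1_right)
  then have "z^(2^k - 1) = 1" using False by simp
  then have e: "cmod z ^ (2^k - 1) = 1 ^ (2^k - 1)" by (metis norm_one norm_power power_one)
  have "(2::nat) \<le> 2^k" using assms(2) by (metis power_one_right power_increasing_iff one_less_numeral_iff semiring_norm(76))
  then have p: "2^k - 1 > (0::nat)" by simp
  have "cmod z = 1" by (rule power_eq_imp_eq_base[OF e norm_ge_zero zero_le_one p])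
  then show ?thesis by simp
qed simp

lemma per_SA: assumes "periodic_pt M" shows "M \<in> SA"
proof -
  obtain k where k: "k \<ge> 1" "(Phi_Id^^k) M = M" using assms unfolding periodic_pt_def by blast
  obtain P Q T :: cmat2 where PQ: "P ** Q = mat 1" "Q ** P = mat 1" "T$2$1 = 0" "M = P ** T ** Q" using triang by blast
  have "P ** (Phi_Id^^k) T ** Q = P ** T ** Q" using phi_conj[OF PQ(2)] k(2) PQ(4) by metis
  then have "Q ** (P ** (Phi_Id^^k) T ** Q) ** P = Q ** (P ** T ** Q) ** P" by simp
  then have kt: "(Phi_Id^^k) T = T" by (simp add: matrix_mul_assoc PQ) (simp add: matrix_mul_assoc[symmetric] PQ)
  have r: "T$1$1^(2^k) = T$1$1" "T$2$2^(2^k) = T$2$2" using phi_tri_gen[OF PQ(3), of k] kt by auto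
  have tr: "trace M = T$1$1 + T$2$2" "det M = T$1$1 * T$2$2"
    using tr_det_conj[OF PQ(1,2), of T] PQ(3,4) by (simp_all add: trace2 det_2)
  show ?thesis
  proof (cases "T$1$1 = 0 \<and> T$2$2 = 0")
    case True
    then have "(Phi_Id^^k) T = mat 0" using phi_zero[OF PQ(3) _ _ k(1)] by simp
    then have "T = mat 0" using kt by simp
    then have "M = mat 0" using PQ(4) by (simp add: cmat_eq)
    then show ?thesis unfolding SA_def by simp
  next
    case False
    then have "CC (T$1$1) (T$2$2)" using root_unit[OF r(1) k(1)] root_unit[OF r(2) k(1)] unfolding CC_def by auto
    then show ?thesis using CC_SA tr by blast
  qed
qed

lemma unit_cis: "cmod z = 1 \<Longrightarrow> cis (Arg z) = z"
proof -
  assume a: "cmod z = 1"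
  then have "z \<noteq> 0" by auto
  then have "cis (Arg z) = sgn z" by (rule cis_Arg)
  also have "\<dots> = z" using a by (simp add: sgn_eq)
  finally show ?thesis .
qed

lemma seqs: assumes "CC l m"
  shows "\<exists>a b. a \<longlonglongrightarrow> l \<and> b \<longlonglongrightarrow> m \<and> (\<forall>n. a n \<noteq> b n \<and> a n ^ (2^(n+2)) = a n \<and> b n ^ (2^(n+2)) = b n)"
proof -
  have z: "(\<lambda>n. ap th 0 n) \<longlonglongrightarrow> cis th" for th using ap_lim[of "\<lambda>n. 0" th] by simp
  have nz: "ap th e n \<noteq> 0" for th e n unfolding ap_def by (rule cis_neq_zero)
  have z0: "(0::complex) ^ (2^(n+2)) = 0" for n by simp
  consider "l = 0 \<and> cmod m = 1" | "cmod l = 1 \<and> m = 0" | "cmod l = 1 \<and> cmod m = 1"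
    using assms unfolding CC_def by blast
  then show ?thesis
  proof cases
    case 1
    then have "(\<lambda>n. ap (Arg m) 0 n) \<longlonglongrightarrow> m" using z[of "Arg m"] unit_cis[of m] by simp
    moreover have "(\<lambda>n. 0::complex) \<longlonglongrightarrow> l" using 1 by simp
    moreover have "\<forall>n. 0 \<noteq> ap (Arg m) 0 n \<and> (0::complex) ^ (2^(n+2)) = 0 \<and> ap (Arg m) 0 n ^ (2^(n+2)) = ap (Arg m) 0 n"
      using nz ap_per z0 by metis
    ultimately show ?thesis by blast
  next
    case 2
    then have "(\<lambda>n. ap (Arg l) 0 n) \<longlonglongrightarrow> l" using z[of "Arg l"] unit_cis[of l] by simp
    moreover have "(\<lambda>n. 0::complex) \<longlonglongrightarrow> m" using 2 by simp
    moreover have "\<forall>n. ap (Arg l) 0 n \<noteq> 0 \<and> ap (Arg l) 0 n ^ (2^(n+2)) = ap (Arg l) 0 n \<and> (0::complex) ^ (2^(n+2)) = 0"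
      using nz ap_per z0 by metis
    ultimately show ?thesis by blast
  next
    case 3
    define a where "a n = ap (Arg l) 0 n" for n
    define e where "e n = (if ap (Arg m) 0 n = a n then 1 else (0::int))" for n
    define b where "b n = ap (Arg m) (e n) n" for n
    have "\<And>n. 0 \<le> e n \<and> e n \<le> 1" unfolding e_def by simp
    then have "b \<longlonglongrightarrow> cis (Arg m)" unfolding b_def by (rule ap_lim)
    then have bl: "b \<longlonglongrightarrow> m" using 3 unit_cis[of m] by simp
    have "a \<longlonglongrightarrow> cis (Arg l)" unfolding a_def by (rule z)
    then have al: "a \<longlonglongrightarrow> l" using 3 unit_cis[of l] by simp
    have "a n \<noteq> b n" for n
    proof (cases "ap (Arg m) 0 n = a n")
      case True
      then have "b n = ap (Arg m) (0+1) n" unfolding b_def e_def by simp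
      then show ?thesis using ap_ne[of "Arg m" 0 n] True by simp
    next
      case False
      then show ?thesis unfolding b_def e_def by simp
    qed
    moreover have "a n ^ (2^(n+2)) = a n" "b n ^ (2^(n+2)) = b n" for n
      unfolding a_def b_def by (rule ap_per)+
    ultimately show ?thesis using al bl by blast
  qed
qed

lemma tendsto_mmul: fixes f g :: "'b \<Rightarrow> cmat2" assumes "(f \<longlongrightarrow> A) F" "(g \<longlongrightarrow> B) F"
  shows "((\<lambda>x. f x ** g x :: cmat2) \<longlongrightarrow> A ** B) F"
  by (intro vec_tendstoI) (simp, intro tendsto_intros assms)

lemma tendsto_mk2: assumes "a \<longlonglongrightarrow> x" "b \<longlonglongrightarrow> y"
  shows "(\<lambda>n. mk2 (a n) c d (b n)) \<longlonglongrightarrow> mk2 x c d y"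
proof (intro vec_tendstoI)
  fix i j :: 2
  show "(\<lambda>n. mk2 (a n) c d (b n) $ i $ j) \<longlonglongrightarrow> mk2 x c d y $ i $ j"
    using exhaust_2[of i] exhaust_2[of j] assms by auto
qed

lemma SA_cl: assumes "M \<in> SA" shows "M \<in> closure {M. periodic_pt M}"
proof (cases "M = mat 0")
  case True
  have "periodic_pt (mat 0)" unfolding periodic_pt_def
    by (intro exI[of _ 1]) (simp add: Phi_Id_def cmat_eq)
  then show ?thesis using True closure_subset by blast
next
  case False
  obtain P Q T :: cmat2 where PQ: "P ** Q = mat 1" "Q ** P = mat 1" "T$2$1 = 0" "M = P ** T ** Q" using triang by blast
  have tr: "trace M = T$1$1 + T$2$2" "det M = T$1$1 * T$2$2"
    using tr_det_conj[OF PQ(1,2), of T] PQ(3,4) by (simp_all add: trace2 det_2)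
  have "CC (T$1$1) (T$2$2)" using SA_CC[OF assms False tr] .
  then obtain a b where ab: "a \<longlonglongrightarrow> T$1$1" "b \<longlonglongrightarrow> T$2$2"
    "\<And>n. a n \<noteq> b n \<and> a n ^ (2^(n+2)) = a n \<and> b n ^ (2^(n+2)) = b n"
    using seqs by blast
  define D where "D n = mk2 (a n) (T$1$2) 0 (b n)" for n
  have TT: "T = mk2 (T$1$1) (T$1$2) 0 (T$2$2)" using PQ(3) by (simp add: cmat_eq)
  have "D \<longlonglongrightarrow> T" unfolding D_def by (subst TT, rule tendsto_mk2[OF ab(1,2)])
  then have "(\<lambda>n. P ** D n ** Q) \<longlonglongrightarrow> M" unfolding PQ(4)
    by (intro tendsto_mmul tendsto_const)
  moreover have "periodic_pt (P ** D n ** Q)" for n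
  proof -
    have dd: "(Phi_Id^^(n+2)) (D n) = D n"
      using phi_tri[of "D n" "n+2"] ab(3)[of n] unfolding D_def by (simp add: cmat_eq)
    have "(Phi_Id^^(n+2)) (P ** D n ** Q) = P ** D n ** Q" by (simp only: phi_conj[OF PQ(2)] dd)
    then show ?thesis unfolding periodic_pt_def by (intro exI[of _ "n+2"]) simp
  qed
  ultimately show ?thesis unfolding closure_sequential
    by (intro exI[of _ "\<lambda>n. P ** D n ** Q"]) simp
qed

theorem proposition3p4:
  shows "closure {M :: cmat2. periodic_pt M} = {mat 0} \<union> Lambda0 \<union> Lambda1 \<union> Lambda2"
  unfolding S_eq
proof
  show "closure {M. periodic_pt M} \<subseteq> SA"
    using closed_SA per_SA by (intro closure_minimal) auto
  show "SA \<subseteq> closure {M. periodic_pt M}" using SA_cl by blast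
qed

end
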